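(* Let $K\subset\mathbb{R}^2$ be a convex set such that a maximal-area triangle $T$ contained in $K$ is an equilateral triangle of side length $1$ with barycenter at the origin $o$. Then every point $p\in\partial K$ is $(60^\circ,\tfrac12)$-bisecting in $K$.
   Context: For a convex set $C$ containing $o$ and $p\in\partial C$, $p$ is called $(\theta,\ell)$-bisecting if the unique isosceles triangle $T_p(\theta,\ell)$ with apex $p$, apex angle $\theta$, two equal sides of length $\ell$ emanating from $p$, and such that the segment $po$ internally bisects the apex angle, is contained in $C$. *)

theory Defs
  imports "HOL-Analysis.Analysis"
begin

text \<open>The plane R^2 is modelled as the complex numbers; the origin o is 0.\<close>

definition triangle :: "complex \<Rightarrow> complex \<Rightarrow> complex \<Rightarrow> complex set" where
  "triangle a b c = convex hull {a, b, c}"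

definition tri_area :: "complex \<Rightarrow> complex \<Rightarrow> complex \<Rightarrow> real" where
  "tri_area a b c = measure lebesgue (triangle a b c)"

definition max_area_triangle :: "complex set \<Rightarrow> complex \<Rightarrow> complex \<Rightarrow> complex \<Rightarrow> bool" where
  "max_area_triangle K a b c \<longleftrightarrow> triangle a b c \<subseteq> K \<and>
     (\<forall>a' b' c'. triangle a' b' c' \<subseteq> K \<longrightarrow> tri_area a' b' c' \<le> tri_area a b c)"

text \<open>The isosceles triangle T_p(theta, l): apex p, apex angle theta, two equal sides of
  length l from p, and the direction from p towards o (=0) bisects the apex angle.\<close>
definition bisect_triangle :: "complex \<Rightarrow> real \<Rightarrow> real \<Rightarrow> complex set" where
  "bisect_triangle p \<theta> l =
     (let u = - p / complex_of_real (cmod p) in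
      triangle p (p + of_real l * cis (\<theta>/2) * u) (p + of_real l * cis (-\<theta>/2) * u))"

definition bisecting :: "complex set \<Rightarrow> real \<Rightarrow> real \<Rightarrow> complex \<Rightarrow> bool" where
  "bisecting C \<theta> l p \<longleftrightarrow> p \<in> frontier C \<and> bisect_triangle p \<theta> l \<subseteq> C"

end

theory Submission
  imports Defs
begin

lemma sqle: fixes t c :: real assumes "-c \<le> t" "t \<le> c" shows "t*t \<le> c*c"
proof -
  have "(c - t)*(c + t) \<ge> 0" using assms by (intro mult_nonneg_nonneg) auto
  then show ?thesis by (simp add: algebra_simps)
qed

lemma sq_le1: fixes t :: real assumes "t*t \<le> 1" shows "t \<le> 1"
proof (rule ccontr)
  assume "\<not> t \<le> 1"
  then have "(t - 1)*(t + 1) > 0" by (intro mult_pos_pos) auto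
  then show False using assms by (simp add: algebra_simps)
qed

lemma core_real:
  fixes x y R r3 e :: real
  assumes r3: "r3*r3 = 3" "r3 > 0" and e: "e = 1 \<or> e = -1"
    and R: "R*R = x*x + y*y" "R \<ge> 0"
    and hx: "x \<le> -1/2" and h1: "-x/2 - r3*y/2 \<le> 1" and h2: "-x/2 + r3*y/2 \<le> 1"
    and p: "p = x - r3/(2*R)*(r3*x - e*y)/2" and q: "q = y - r3/(2*R)*(r3*y + e*x)/2"
  shows "(\<exists>l0 l1 l2. l0\<ge>0 \<and> l1\<ge>0 \<and> l2\<ge>0 \<and> l0+l1+l2=1 \<and> p = l0 - (l1+l2)/2 \<and> q = r3/2*(l1-l2))
       \<or> (\<exists>m0 m1 m2. m0\<ge>0 \<and> m1\<ge>0 \<and> m2\<ge>0 \<and> m0+m1+m2=1 \<and> p = m0*x - (m1+m2)/2 \<and> q = m0*y + r3/2*(m1-m2))"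
proof -
  have ee: "e * e = 1" using e by auto
  have xx: "x*x \<ge> 1/4"
  proof -
    have "(-x - 1/2)*(-x + 1/2) \<ge> 0" using hx by (intro mult_nonneg_nonneg) auto
    then show ?thesis by (simp add: algebra_simps)
  qed
  have Rh: "R \<ge> 1/2"
  proof (rule ccontr)
    assume "\<not> R \<ge> 1/2"
    then have "(1/2 - R)*(1/2 + R) > 0" using R(2) by (intro mult_pos_pos) auto
    then have "R*R < 1/4" by (simp add: algebra_simps)
    moreover have "y*y \<ge> 0" by simp
    ultimately show False using R(1) xx by linarith
  qed
  have Rp: "R > 0" using Rh by simp
  have Rvx: "R*p = R*x - 3*x/4 + e*r3*y/4" using Rp r3 unfolding p by (simp add: field_simps)
  have Rvy: "R*q = R*y - 3*y/4 - e*r3*x/4" using Rp r3 unfolding q by (simp add: field_simps)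
  show ?thesis
  proof (cases "p \<ge> -1/2")
    case True
    have A: "p + r3*q \<le> 1 \<and> p - r3*q \<le> 1"
    proof (cases "R \<le> 1")
      case True
      have "R*R*(p*p + q*q) = R*R*((R - 3/4)*(R-3/4) + 3/16)"
      proof -
        have "R*R*(p*p + q*q) = (R*p)*(R*p) + (R*q)*(R*q)" by (simp add: algebra_simps)
        also have "\<dots> = R*R*((R - 3/4)*(R-3/4) + 3/16)"
        proof -
          have "(R*x - 3*x/4 + e*r3*y/4)*(R*x - 3*x/4 + e*r3*y/4) + (R*y - 3*y/4 - e*r3*x/4)*(R*y - 3*y/4 - e*r3*x/4)
              = (x*x+y*y)*((R-3/4)*(R-3/4) + (e*e)*(r3*r3)/16)" by (simp add: field_simps)
          then show ?thesis unfolding Rvx Rvy r3(1) ee R(1)[symmetric] by simp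
        qed
        finally show ?thesis .
      qed
      then have n: "p*p + q*q = (R - 3/4)*(R-3/4) + 3/16" using Rp by simp
      have "(1 - 2*R)*(R-1) \<ge> 0" using Rh True by (intro mult_nonpos_nonpos) auto
      then have n2: "4*(p*p + q*q) \<le> 1" using n by (simp add: algebra_simps)
      have q1: "(p + r3*q)*(p + r3*q) \<le> 1"
      proof -
        have "4*(p*p+q*q) - (p + r3*q)*(p + r3*q) = (r3*p - q)*(r3*p - q)"
          by (simp add: algebra_simps r3)
        moreover have "(r3*p - q)*(r3*p - q) \<ge> 0" by simp
        ultimately show ?thesis using n2 by linarith
      qed
      have q2: "(p - r3*q)*(p - r3*q) \<le> 1"
      proof -
        have "4*(p*p+q*q) - (p - r3*q)*(p - r3*q) = (r3*p + q)*(r3*p + q)"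
          by (simp add: algebra_simps r3)
        moreover have "(r3*p + q)*(r3*p + q) \<ge> 0" by simp
        ultimately show ?thesis using n2 by linarith
      qed
      show ?thesis using sq_le1[OF q1] sq_le1[OF q2] by simp
    next
      case False
      have c1: "1 - x - r3*y \<ge> 0" using h2 hx by simp
      have c2: "1 - x + r3*y \<ge> 0" using h1 hx by simp
      have e1: "R*(1 - p - r3*q) = R*(1 - x - r3*y) + (3/4)*x*(1+e) + (r3/4)*y*(3 - e)"
      proof -
        have "R*(1-p-r3*q) = R - R*p - r3*(R*q)" by (simp add: algebra_simps)
        also have "\<dots> = R - (R*x - 3*x/4 + e*r3*y/4) - r3*(R*y - 3*y/4 - e*r3*x/4)" by (simp only: Rvx Rvy)
        also have "\<dots> = R - R*x + 3*x/4 - e*r3*y/4 - r3*R*y + 3*r3*y/4 + e*(r3*r3)*x/4" by (simp add: algebra_simps)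
        also have "\<dots> = R*(1 - x - r3*y) + (3/4)*x*(1+e) + (r3/4)*y*(3 - e)" unfolding r3(1) by (simp add: field_simps)
        finally show ?thesis .
      qed
      have e2: "R*(1 - p + r3*q) = R*(1 - x + r3*y) + (3/4)*x*(1-e) - (r3/4)*y*(3 + e)"
      proof -
        have "R*(1-p+r3*q) = R - R*p + r3*(R*q)" by (simp add: algebra_simps)
        also have "\<dots> = R - (R*x - 3*x/4 + e*r3*y/4) + r3*(R*y - 3*y/4 - e*r3*x/4)" by (simp only: Rvx Rvy)
        also have "\<dots> = R - R*x + 3*x/4 - e*r3*y/4 + r3*R*y - 3*r3*y/4 - e*(r3*r3)*x/4" by (simp add: algebra_simps)
        also have "\<dots> = R*(1 - x + r3*y) + (3/4)*x*(1-e) - (r3/4)*y*(3 + e)" unfolding r3(1) by (simp add: field_simps)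
        finally show ?thesis .
      qed
      have m1: "R*(1 - x - r3*y) \<ge> 1 - x - r3*y" using mult_right_mono[of 1 R "1 - x - r3*y"] c1 False by simp
      have m2: "R*(1 - x + r3*y) \<ge> 1 - x + r3*y" using mult_right_mono[of 1 R "1 - x + r3*y"] c2 False by simp
      have "R*(1 - p - r3*q) \<ge> 0"
      proof (cases "e = 1")
        case True then show ?thesis using e1 m1 h1 h2 hx by simp
      next
        case False then have "e = -1" using e by simp
        then show ?thesis using e1 m1 h1 h2 hx by simp
      qed
      moreover have "R*(1 - p + r3*q) \<ge> 0"
      proof (cases "e = 1")
        case True then show ?thesis using e2 m2 h1 h2 hx by simp
      next
        case False then have "e = -1" using e by simp
        then show ?thesis using e2 m2 h1 h2 hx by simp
      qed
      ultimately show ?thesis using Rp by (simp add: zero_le_mult_iff)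
    qed
    show ?thesis
      apply (rule disjI1)
      apply (rule exI[of _ "(1+2*p)/3"], rule exI[of _ "(1 - p + r3*q)/3"], rule exI[of _ "(1 - p - r3*q)/3"])
      using A True by (auto simp: field_simps r3)
  next
    case False
    have xl: "x < -1/2"
    proof (rule ccontr)
      assume "\<not> x < -1/2"
      then have x: "x = -1/2" using hx by simp
      have "R*p < R*(-1/2)" using False Rp by (intro mult_strict_left_mono) auto
      then have "e*r3*y < -3/2" using Rvx x by simp
      then show False using e h1 h2 x by (elim disjE) simp_all
    qed
    define E1 where "E1 = 3*x - r3*(1+e)*y - 2*e*(R*R) - e*x"
    define E2 where "E2 = 3*x - r3*(e-1)*y + 2*e*(R*R) + e*x"
    have circ: "R*R + 2*x \<le> 0"
    proof -
      have "(r3*y)*(r3*y) \<le> (2+x)*(2+x)" using h1 h2 by (intro sqle) auto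
      moreover have "(r3*y)*(r3*y) = (r3*r3)*(y*y)" by (simp add: algebra_simps)
      ultimately have "3*(y*y) \<le> (2+x)*(2+x)" using r3(1) by simp
      moreover have "(2*x+1)*(2*x+4) \<le> 0" using hx h1 h2 by (intro mult_nonpos_nonneg) auto
      ultimately show ?thesis using R(1) by (simp add: algebra_simps)
    qed
    have x2: "(x - 1/2)*(x-1/2) \<ge> 1"
    proof -
      have "(x - 3/2)*(x+1/2) \<ge> 0" using hx by (intro mult_nonpos_nonpos) auto
      then show ?thesis by (simp add: algebra_simps)
    qed
    have o1: "R*R - x + r3*y \<ge> 0"
    proof -
      have "R*R - x + r3*y = (x - 1/2)*(x-1/2) + (y + r3/2)*(y+r3/2) - 1"
        using R(1) r3 by (simp add: algebra_simps)
      moreover have "(y + r3/2)*(y+r3/2) \<ge> 0" by simp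
      ultimately show ?thesis using x2 by linarith
    qed
    have o2: "R*R - x - r3*y \<ge> 0"
    proof -
      have "R*R - x - r3*y = (x - 1/2)*(x-1/2) + (y - r3/2)*(y-r3/2) - 1"
        using R(1) r3 by (simp add: algebra_simps)
      moreover have "(y - r3/2)*(y-r3/2) \<ge> 0" by simp
      ultimately show ?thesis using x2 by linarith
    qed
    have E1n: "E1 \<le> 0" using e circ o1 unfolding E1_def by (elim disjE) (simp_all add: algebra_simps)
    have E2n: "E2 \<le> 0" using e circ o2 unfolding E2_def by (elim disjE) (simp_all add: algebra_simps)
    define D where "D = 4*R*(2*x+1)"
    define m0 where "m0 = (2*p+1)/(2*x+1)"
    define m1 where "m1 = E1/D"
    define m2 where "m2 = E2/D"
    have den: "D < 0" unfolding D_def using Rp xl by (simp add: mult_pos_neg)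
    have xn: "2*x+1 \<noteq> 0" using xl by simp
    have m0n: "m0 \<ge> 0" unfolding m0_def using False xl by (intro divide_nonpos_nonpos) auto
    have m1n: "m1 \<ge> 0" unfolding m1_def using E1n den by (intro divide_nonpos_neg) auto
    have m2n: "m2 \<ge> 0" unfolding m2_def using E2n den by (intro divide_nonpos_neg) auto
    have Dm0: "D*m0 = 4*R*(2*p+1)" unfolding D_def m0_def using xn by (simp add: field_simps)
    have Dm1: "D*m1 = E1" unfolding m1_def using den by simp
    have Dm2: "D*m2 = E2" unfolding m2_def using den by simp
    have R4p: "4*R*p = 4*R*x - 3*x + e*r3*y" using Rvx by simp
    have R4q: "4*R*q = 4*R*y - 3*y - e*r3*x" using Rvy by simp
    have G1: "D*(m0+m1+m2) = D*1"
    proof -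
      have "D*(m0+m1+m2) = D*m0 + D*m1 + D*m2" by (simp add: algebra_simps)
      also have "\<dots> = D" unfolding Dm0 Dm1 Dm2 unfolding E1_def E2_def D_def using R4p by algebra
      finally show ?thesis by simp
    qed
    have G2: "(2*D)*(m0*x - (m1+m2)/2) = (2*D)*p"
    proof -
      have "(2*D)*(m0*x - (m1+m2)/2) = 2*x*(D*m0) - D*m1 - D*m2" by (simp add: algebra_simps)
      also have "\<dots> = (2*D)*p" unfolding Dm0 Dm1 Dm2 unfolding E1_def E2_def D_def using R4p by algebra
      finally show ?thesis .
    qed
    have G3: "(2*D)*(m0*y + r3/2*(m1-m2)) = (2*D)*q"
    proof -
      have "(2*D)*(m0*y + r3/2*(m1-m2)) = 2*y*(D*m0) + r3*(D*m1 - D*m2)" by (simp add: field_simps)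
      also have "\<dots> = (2*D)*q" unfolding Dm0 Dm1 Dm2 unfolding E1_def E2_def D_def using R4p R4q R(1) r3(1) by algebra
      finally show ?thesis .
    qed
    show ?thesis
      apply (rule disjI2)
      apply (rule exI[of _ m0], rule exI[of _ m1], rule exI[of _ m2])
      using m0n m1n m2n G1 G2 G3 den by simp
  qed
qed

definition c2v :: "complex \<Rightarrow> real^2" where "c2v z = vector [Re z, Im z]"
definition v2c :: "real^2 \<Rightarrow> complex" where "v2c v = Complex (v$1) (v$2)"

lemma c2v_nth[simp]: "c2v z $ 1 = Re z" "c2v z $ 2 = Im z"
  by (simp_all add: c2v_def)

lemma v2c_c2v[simp]: "v2c (c2v z) = z" by (simp add: v2c_def complex_eq_iff)
lemma c2v_v2c[simp]: "c2v (v2c v) = v" by (simp add: v2c_def vec_eq_iff forall_2)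

lemma linear_c2v: "linear c2v"
  by (rule linearI) (simp_all add: vec_eq_iff forall_2)

lemma v2c_meas: "v2c \<in> borel_measurable borel"
proof -
  have "continuous_on UNIV v2c" unfolding v2c_def Complex_eq by (intro continuous_intros)
  then show ?thesis by (rule borel_measurable_continuous_onI)
qed

lemma prod_Basis_2: "(\<Prod>b\<in>(Basis::(real^2) set). f b) = f (axis 1 1) * f (axis 2 1)"
proof -
  have B: "(Basis::(real^2) set) = {axis 1 1, axis 2 1}"
    apply (auto simp: Basis_vec_def)
    subgoal for i using exhaust_2[of i] by auto
    done
  have "axis 1 (1::real) \<noteq> (axis 2 1 :: real^2)" by (simp add: axis_eq_axis)
  then show ?thesis unfolding B by simp
qed

lemma lborel_complex: "distr (lborel :: (real^2) measure) borel v2c = lborel"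
proof (rule lborel_eqI[symmetric])
  fix l u :: complex assume le: "\<And>b. b \<in> Basis \<Longrightarrow> l \<bullet> b \<le> u \<bullet> b"
  have le1: "Re l \<le> Re u" "Im l \<le> Im u" using le[of 1] le[of \<i>] by (auto simp: Basis_complex_def)
  have pre: "v2c -` box l u \<inter> space lborel = box (c2v l) (c2v u)"
    by (auto simp: mem_box_cart mem_box Basis_complex_def v2c_def forall_2)
  have "emeasure (distr lborel borel v2c) (box l u) = emeasure lborel (v2c -` box l u \<inter> space lborel)"
    by (rule emeasure_distr) (use v2c_meas in auto)
  also have "\<dots> = emeasure lborel (box (c2v l) (c2v u))" using pre by simp
  also have "\<dots> = (\<Prod>b\<in>Basis. (c2v u - c2v l) \<bullet> b)"
  proof (rule emeasure_lborel_box)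
    fix b :: "real^2" assume "b \<in> Basis"
    then obtain i where i: "b = axis i 1" by (auto simp: Basis_vec_def)
    show "c2v l \<bullet> b \<le> c2v u \<bullet> b" using exhaust_2[of i] le1 by (auto simp: i inner_axis)
  qed
  also have "\<dots> = (\<Prod>b\<in>Basis. (u - l) \<bullet> b)"
    by (simp add: prod_Basis_2 Basis_complex_def cart_eq_inner_axis[symmetric] inner_axis)
  finally show "emeasure (distr lborel borel v2c) (box l u) = (\<Prod>b\<in>Basis. (u - l) \<bullet> b)" .
qed simp

lemma area_formula:
  fixes A B C :: complex
  shows "measure lebesgue (convex hull {A,B,C}) =
    \<bar>(Re C - Re A) * (Im B - Im A) - (Re B - Re A) * (Im C - Im A)\<bar> / 2"
proof -
  let ?S = "convex hull {A,B,C}"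
  have cpt: "compact ?S" by (intro finite_imp_compact_convex_hull) auto
  then have Sb: "?S \<in> sets borel" by (auto dest: compact_imp_closed)
  have "measure lebesgue ?S = measure lborel ?S" using Sb by simp
  also have "\<dots> = measure (distr lborel borel v2c) ?S" by (simp add: lborel_complex)
  also have "\<dots> = measure lborel (v2c -` ?S \<inter> space lborel)"
    by (rule measure_distr) (use v2c_meas Sb in auto)
  also have "v2c -` ?S \<inter> space lborel = c2v ` ?S"
    by (auto simp: image_iff) (metis c2v_v2c)
  also have "c2v ` ?S = convex hull {c2v A, c2v B, c2v C}"
    by (simp add: convex_hull_linear_image[OF linear_c2v])
  also have "measure lborel (convex hull {c2v A, c2v B, c2v C}) =
     \<bar>(Re C - Re A) * (Im B - Im A) - (Re B - Re A) * (Im C - Im A)\<bar> / 2"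
    by (subst content_triangle) simp
  finally show ?thesis .
qed

definition w3 :: complex where "w3 = Complex (-1/2) (sqrt 3/2)"
definition w3c :: complex where "w3c = Complex (-1/2) (-(sqrt 3/2))"

lemma r3sq: "sqrt 3 * sqrt 3 = (3::real)" by simp

lemma w3_facts: "w3 * w3 = w3c" "w3 * w3c = 1" "w3c * w3 = 1" "w3c * w3c = w3"
  by (simp_all add: w3_def w3c_def complex_eq_iff)

lemma w3_nz: "w3 \<noteq> 0" "w3c \<noteq> 0" by (simp_all add: w3_def w3c_def complex_eq_iff)

lemma core_complex:
  fixes z :: complex and e :: real
  assumes e: "e = 1 \<or> e = -1" and hx: "Re z \<le> -1/2" and h1: "Re (z*w3) \<le> 1" and h2: "Re (z*w3c) \<le> 1"
  defines "v \<equiv> z - of_real (sqrt 3/(2*cmod z)) * (Complex (sqrt 3/2) (e/2) * z)"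
  shows "\<exists>l0 l1 l2. l0 \<ge> 0 \<and> l1 \<ge> 0 \<and> l2 \<ge> 0 \<and> l0+l1+l2 = 1 \<and>
     (v = l0 *\<^sub>R 1 + l1 *\<^sub>R w3 + l2 *\<^sub>R w3c \<or> v = l0 *\<^sub>R z + l1 *\<^sub>R w3 + l2 *\<^sub>R w3c)"
proof -
  have R: "cmod z * cmod z = Re z * Re z + Im z * Im z"
    using cmod_power2[of z] by (simp add: power2_eq_square)
  have h1': "- Re z/2 - sqrt 3 * Im z/2 \<le> 1" using h1 by (simp add: w3_def mult.commute)
  have h2': "- Re z/2 + sqrt 3 * Im z/2 \<le> 1" using h2 by (simp add: w3c_def mult.commute)
  have zn: "cmod z > 0" using hx by auto
  have vx: "Re v = Re z - sqrt 3/(2*cmod z)*(sqrt 3 * Re z - e * Im z)/2"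
    unfolding v_def using zn by (simp add: field_simps)
  have vy: "Im v = Im z - sqrt 3/(2*cmod z)*(sqrt 3 * Im z + e * Re z)/2"
    unfolding v_def using zn by (simp add: field_simps)
  have c: "(\<exists>l0 l1 l2. l0\<ge>0 \<and> l1\<ge>0 \<and> l2\<ge>0 \<and> l0+l1+l2=1 \<and> Re v = l0 - (l1+l2)/2 \<and> Im v = sqrt 3/2*(l1-l2))
       \<or> (\<exists>m0 m1 m2. m0\<ge>0 \<and> m1\<ge>0 \<and> m2\<ge>0 \<and> m0+m1+m2=1 \<and> Re v = m0*Re z - (m1+m2)/2 \<and> Im v = m0*Im z + sqrt 3/2*(m1-m2))"
    using core_real[OF r3sq _ e R _ hx h1' h2' vx vy] by simp
  from c show ?thesis
  proof (elim disjE exE conjE)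
    fix l0 l1 l2 assume *: "l0\<ge>0" "l1\<ge>0" "l2\<ge>0" "l0+l1+l2=1" "Re v = l0 - (l1+l2)/2" "Im v = sqrt 3/2*(l1-l2)"
    have "v = l0 *\<^sub>R 1 + l1 *\<^sub>R w3 + l2 *\<^sub>R w3c"
      using * by (simp add: complex_eq_iff w3_def w3c_def field_simps)
    then show ?thesis using * by blast
  next
    fix l0 l1 l2 assume *: "l0\<ge>0" "l1\<ge>0" "l2\<ge>0" "l0+l1+l2=1" "Re v = l0 * Re z - (l1+l2)/2" "Im v = l0 * Im z + sqrt 3/2*(l1-l2)"
    have "v = l0 *\<^sub>R z + l1 *\<^sub>R w3 + l2 *\<^sub>R w3c"
      using * by (simp add: complex_eq_iff w3_def w3c_def field_simps)
    then show ?thesis using * by blast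
  qed
qed

lemma inv_w3: "inverse w3 = w3c" "inverse w3c = w3"
  using w3_facts by (auto intro: inverse_unique)

lemma cmod_w3: "cmod w3 = 1" "cmod w3c = 1"
  by (simp_all add: w3_def w3c_def cmod_def power2_eq_square)

lemma cis_30: "cis (pi/3/2) = Complex (sqrt 3/2) (1/2)" "cis (-(pi/3)/2) = Complex (sqrt 3/2) (-1/2)"
proof -
  have h: "pi/3/2 = pi/6" by simp
  show "cis (pi/3/2) = Complex (sqrt 3/2) (1/2)" unfolding h by (simp add: complex_eq_iff cos_30 sin_30)
  have h2: "-(pi/3)/2 = -(pi/6)" by simp
  show "cis (-(pi/3)/2) = Complex (sqrt 3/2) (-1/2)" unfolding h2 by (simp add: complex_eq_iff cos_30 sin_30)
qed

lemma vertex_case: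
  fixes K :: "complex set" and a' p :: complex
  assumes K: "convex K" and sub: "{a', a'*w3, a'*w3c} \<subseteq> K" and pK: "p \<in> K"
    and na: "cmod a' * sqrt 3 = 1"
    and hx: "Re (p/a') \<le> -1/2" and h1: "Re (p/(a'*w3c)) \<le> 1" and h2: "Re (p/(a'*w3)) \<le> 1"
  shows "bisect_triangle p (pi/3) (1/2) \<subseteq> K"
proof -
  define z where "z = p/a'"
  have an: "a' \<noteq> 0" using na by auto
  have pz: "p = a' * z" using an by (simp add: z_def)
  have e1: "p/(a'*w3c) = z*w3" by (simp add: z_def divide_inverse inv_w3 mult.assoc)
  have e2: "p/(a'*w3) = z*w3c" by (simp add: z_def divide_inverse inv_w3 mult.assoc)
  have hx': "Re z \<le> -1/2" using hx by (simp add: z_def)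
  have h1': "Re (z*w3) \<le> 1" using h1 e1 by simp
  have h2': "Re (z*w3c) \<le> 1" using h2 e2 by simp
  have zn: "cmod z > 0" using hx' by auto
  define ve where "ve e = z - of_real (sqrt 3/(2*cmod z)) * (Complex (sqrt 3/2) (e/2) * z)" for e :: real
  have hull1: "convex hull {a', a'*w3, a'*w3c} \<subseteq> K" by (rule hull_minimal[where S=convex, OF sub K])
  have hull2: "convex hull {p, a'*w3, a'*w3c} \<subseteq> K" by (rule hull_minimal) (use sub pK K in auto)
  have qK: "a' * ve e \<in> K" if e: "e = 1 \<or> e = -1" for e
  proof -
    from core_complex[OF e hx' h1' h2']
    obtain l0 l1 l2 where l: "l0 \<ge> 0" "l1 \<ge> 0" "l2 \<ge> 0" "l0+l1+l2 = 1"
      and d: "ve e = l0 *\<^sub>R 1 + l1 *\<^sub>R w3 + l2 *\<^sub>R w3c \<or> ve e = l0 *\<^sub>R z + l1 *\<^sub>R w3 + l2 *\<^sub>R w3c"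
      unfolding ve_def by blast
    from d show ?thesis
    proof
      assume "ve e = l0 *\<^sub>R 1 + l1 *\<^sub>R w3 + l2 *\<^sub>R w3c"
      then have "a' * ve e = l0 *\<^sub>R a' + l1 *\<^sub>R (a'*w3) + l2 *\<^sub>R (a'*w3c)"
        by (simp add: algebra_simps)
      then have "a' * ve e \<in> convex hull {a', a'*w3, a'*w3c}"
        unfolding convex_hull_3 using l by blast
      then show ?thesis using hull1 by blast
    next
      assume "ve e = l0 *\<^sub>R z + l1 *\<^sub>R w3 + l2 *\<^sub>R w3c"
      then have "a' * ve e = l0 *\<^sub>R p + l1 *\<^sub>R (a'*w3) + l2 *\<^sub>R (a'*w3c)"
        by (simp add: algebra_simps pz)
      then have "a' * ve e \<in> convex hull {p, a'*w3, a'*w3c}"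
        unfolding convex_hull_3 using l by blast
      then show ?thesis using hull2 by blast
    qed
  qed
  have cp: "cmod p = cmod z / sqrt 3"
  proof -
    have "cmod p = cmod a' * cmod z" by (simp add: pz norm_mult)
    also have "cmod a' = 1 / sqrt 3" using na by (simp add: field_simps)
    finally show ?thesis by simp
  qed
  have vert: "p + of_real (1/2) * Complex (sqrt 3/2) (e/2) * (- p / of_real (cmod p)) = a' * ve e" for e
  proof -
    have "of_real (1/2) * Complex (sqrt 3/2) (e/2) * (- p / of_real (cmod p))
        = - (of_real (sqrt 3/(2*cmod z)) * (Complex (sqrt 3/2) (e/2) * p))"
      using zn by (simp add: cp field_simps)
    then show ?thesis unfolding ve_def by (simp add: pz algebra_simps)
  qed
  have "bisect_triangle p (pi/3) (1/2) = convex hull {p, a' * ve 1, a' * ve (-1)}"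
    unfolding bisect_triangle_def triangle_def Let_def cis_30
    using vert[of 1] vert[of "-1"] by simp
  also have "\<dots> \<subseteq> K" by (rule hull_minimal) (use pK qK K in auto)
  finally show ?thesis .
qed

lemma area_v:
  fixes v z :: complex
  shows "tri_area (v * z) (v * w3) (v * w3c) = (Re v * Re v + Im v * Im v) * sqrt 3 * \<bar>Re z + 1/2\<bar> / 2"
proof -
  have "(Re (v * w3c) - Re (v * z)) * (Im (v * w3) - Im (v * z)) - (Re (v * w3) - Re (v * z)) * (Im (v * w3c) - Im (v * z))
      = - ((Re v * Re v + Im v * Im v) * sqrt 3 * (Re z + 1/2))"
    by (simp add: w3_def w3c_def algebra_simps)
  then show ?thesis unfolding tri_area_def triangle_def area_formula
    by (simp add: abs_mult)
qed

lemma cancel_helper: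
  fixes M t s :: real
  assumes "0 < M" "M * t / 2 \<le> M * s / 2"
  shows "t \<le> s"
proof -
  have "M * t \<le> M * s" using assms(2) by linarith
  then show ?thesis using assms(1) by (simp add: mult_le_cancel_left_pos)
qed

lemma max_vertex:
  assumes K: "convex K" and M: "max_area_triangle K a b c" and S: "{a,b,c} = {v, v * w3, v * w3c}"
    and vn: "v \<noteq> 0" and pK: "p \<in> K"
  shows "Re (p/v) \<le> 1"
proof -
  have T: "triangle a b c \<subseteq> K" and mx: "\<And>a' b' c'. triangle a' b' c' \<subseteq> K \<Longrightarrow> tri_area a' b' c' \<le> tri_area a b c"
    using M unfolding max_area_triangle_def by auto
  have "{a,b,c} \<subseteq> triangle a b c" unfolding triangle_def by (rule hull_subset)
  then have vK: "{v * w3, v * w3c} \<subseteq> K" using S T by auto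
  have "triangle p (v * w3) (v * w3c) \<subseteq> K" unfolding triangle_def by (rule hull_minimal) (use pK vK K in auto)
  then have le: "tri_area p (v * w3) (v * w3c) \<le> tri_area a b c" using mx by blast
  have eqa: "tri_area a b c = tri_area (v * 1) (v * w3) (v * w3c)" unfolding tri_area_def triangle_def using S by simp
  have pz: "p = v * (p/v)" using vn by simp
  have "tri_area p (v * w3) (v * w3c) = tri_area (v * (p/v)) (v * w3) (v * w3c)" using pz by simp
  then have "(Re v * Re v + Im v * Im v) * sqrt 3 * \<bar>Re (p/v) + 1/2\<bar> / 2 \<le> (Re v * Re v + Im v * Im v) * sqrt 3 * \<bar>Re 1 + 1/2\<bar> / 2"
    using le eqa area_v by metis
  moreover have "(Re v * Re v + Im v * Im v) * sqrt 3 > 0"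
    using vn by (intro mult_pos_pos) (auto simp: complex_eq_iff add_pos_pos sum_squares_gt_zero_iff)
  ultimately have "\<bar>Re (p/v) + 1/2\<bar> \<le> \<bar>Re 1 + 1/2\<bar>"
    by (rule cancel_helper[rotated])
  then have "Re (p/v) + 1/2 \<le> \<bar>Re 1 + 1/2\<bar>" by (rule abs_le_D1)
  then show ?thesis by simp
qed

lemma interior_case:
  assumes T: "convex hull {a, a*w3, a*w3c} \<subseteq> K" and an: "a \<noteq> 0" and pF: "p \<in> frontier K"
  shows "Re (p/a) \<le> -1/2 \<or> Re (p/(a*w3)) \<le> -1/2 \<or> Re (p/(a*w3c)) \<le> -1/2"
proof (rule ccontr)
  define U where "U = {q. -1/2 < Re (q/a)} \<inter> {q. -1/2 < Re (q/(a*w3))} \<inter> {q. -1/2 < Re (q/(a*w3c))}"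
  assume "\<not> ?thesis"
  then have pU: "p \<in> U" unfolding U_def by auto
  have oU: "open U" unfolding U_def using an w3_nz
    by (intro open_Int open_Collect_less continuous_intros) auto
  have "U \<subseteq> convex hull {a, a*w3, a*w3c}"
  proof
    fix q assume "q \<in> U"
    define z where "z = q/a"
    have e1: "q/(a*w3c) = z*w3" by (simp add: z_def divide_inverse inv_w3 mult.assoc)
    have e2: "q/(a*w3) = z*w3c" by (simp add: z_def divide_inverse inv_w3 mult.assoc)
    define l0 where "l0 = (1 + 2 * Re z)/3"
    define l1 where "l1 = (1 + 2 * Re (z*w3c))/3"
    define l2 where "l2 = (1 + 2 * Re (z*w3))/3"
    have l: "l0 \<ge> 0" "l1 \<ge> 0" "l2 \<ge> 0" using \<open>q \<in> U\<close> unfolding U_def l0_def l1_def l2_def e1[symmetric] e2[symmetric] by (auto simp: z_def)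
    have s: "l0 + l1 + l2 = 1" unfolding l0_def l1_def l2_def by (simp add: w3_def w3c_def field_simps)
    have "z = l0 *\<^sub>R 1 + l1 *\<^sub>R w3 + l2 *\<^sub>R w3c"
      unfolding l0_def l1_def l2_def by (simp add: complex_eq_iff w3_def w3c_def field_simps)
    then have "q = l0 *\<^sub>R a + l1 *\<^sub>R (a*w3) + l2 *\<^sub>R (a*w3c)"
      using an unfolding z_def by (simp add: algebra_simps divide_eq_eq)
    then show "q \<in> convex hull {a, a*w3, a*w3c}" unfolding convex_hull_3 using l s by blast
  qed
  then have "U \<subseteq> interior K" using T oU by (intro interior_maximal) auto
  then show False using pU pF unfolding frontier_def by auto
qed

lemma equilateral:
  fixes a b c :: complex
  assumes "dist a b = 1" "dist b c = 1" "dist c a = 1" "(a+b+c)/3 = 0"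
  shows "{a,b,c} = {a, a*w3, a*w3c} \<and> cmod a * sqrt 3 = 1"
proof -
  have h0: "a+b+c = 0" using assms(4) by simp
  have "c = (a+b+c) - a - b" by simp
  then have c: "c = -a-b" using h0 by simp
  define A where "A = Re a * Re a + Im a * Im a"
  define B where "B = Re b * Re b + Im b * Im b"
  define P where "P = Re a * Re b + Im a * Im b"
  have d: "cmod x = 1 \<Longrightarrow> Re x * Re x + Im x * Im x = 1" for x
    using cmod_power2[of x] by (simp add: power2_eq_square)
  have q1: "A + B - 2*P = 1" using d[of "a-b"] assms(1) by (simp add: dist_complex_def A_def B_def P_def algebra_simps)
  have q2: "A + 4*B + 4*P = 1" using d[of "b-c"] assms(2) by (simp add: dist_complex_def A_def B_def P_def c algebra_simps)
  have q3: "4*A + B + 4*P = 1" using d[of "c-a"] assms(3) by (simp add: dist_complex_def A_def B_def P_def c algebra_simps)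
  have A: "A = 1/3" and B: "B = 1/3" and P: "P = -1/6" using q1 q2 q3 by linarith+
  have an: "a \<noteq> 0" using A by (auto simp: A_def)
  have re: "Re (b/a) = -1/2" using A P by (simp add: Re_divide A_def P_def power2_eq_square algebra_simps)
  have lag: "(Re a * Im b - Im a * Re b) * (Re a * Im b - Im a * Re b) = A*B - P*P"
    unfolding A_def B_def P_def by (simp add: algebra_simps)
  have im: "Im (b/a) * Im (b/a) = 3/4"
  proof -
    have "Im (b/a) = (Re a * Im b - Im a * Re b) / A" by (simp add: Im_divide A_def power2_eq_square algebra_simps)
    then have "Im (b/a) * Im (b/a) = (A*B - P*P) / (A*A)" using lag by simp
    then show ?thesis using A B P by simp
  qed
  have "(Im (b/a) - sqrt 3/2) * (Im (b/a) + sqrt 3/2) = 0" using im by (simp add: algebra_simps)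
  then have "Im (b/a) = sqrt 3/2 \<or> Im (b/a) = -(sqrt 3/2)" by auto
  then have t: "b/a = w3 \<or> b/a = w3c" using re by (auto simp: complex_eq_iff w3_def w3c_def)
  have bt: "b = a * (b/a)" using an by simp
  have sum: "-1 - w3 = w3c" "-1 - w3c = w3" by (simp_all add: complex_eq_iff w3_def w3c_def)
  have S: "{a,b,c} = {a, a*w3, a*w3c}"
  proof (cases "b/a = w3")
    case True
    then have "b = a*w3" using bt by simp
    moreover have "c = a*(-1 - w3)" using c \<open>b = a*w3\<close> by (simp add: algebra_simps)
    then have "c = a*w3c" using sum(1) by simp
    ultimately show ?thesis by simp
  next
    case False
    then have "b/a = w3c" using t by simp
    then have "b = a*w3c" using bt by simp
    moreover have "c = a*(-1 - w3c)" using c \<open>b = a*w3c\<close> by (simp add: algebra_simps)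
    then have "c = a*w3" using sum(2) by simp
    ultimately show ?thesis by auto
  qed
  have "cmod a = sqrt (1/3)" using A cmod_def[of a] by (simp add: A_def power2_eq_square)
  then have "cmod a * sqrt 3 = sqrt (1/3 * 3)" by (simp only: real_sqrt_mult)
  then show ?thesis using S by simp
qed

theorem lemma3p2:
  fixes K :: "complex set" and a b c :: complex
  assumes "convex K" and "compact K"
    and "max_area_triangle K a b c"
    and "dist a b = 1" and "dist b c = 1" and "dist c a = 1"
    and "(a + b + c) / 3 = 0"
  shows "\<forall>p \<in> frontier K. bisecting K (pi / 3) (1/2) p"
proof
  fix p assume pF: "p \<in> frontier K"
  have Kc: "closed K" using assms(2) by (rule compact_imp_closed)
  have pK: "p \<in> K" using pF frontier_subset_closed[OF Kc] by blast
  obtain S: "{a,b,c} = {a, a*w3, a*w3c}" and na: "cmod a * sqrt 3 = 1"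
    using equilateral[OF assms(4-7)] by blast
  have an: "a \<noteq> 0" using na by auto
  have T: "triangle a b c \<subseteq> K" using assms(3) unfolding max_area_triangle_def by auto
  have T': "convex hull {a, a*w3, a*w3c} \<subseteq> K" using T S unfolding triangle_def by simp
  define V where "V = {a, a*w3, a*w3c}"
  have rot: "{v, v * w3, v * w3c} = V" if "v \<in> V" for v
    using that unfolding V_def by (auto simp: mult.assoc w3_facts)
  have rotw: "v * w3 \<in> V" "v * w3c \<in> V" if "v \<in> V" for v
    using rot[OF that] by auto
  have nv: "cmod v * sqrt 3 = 1" if "v \<in> V" for v
    using that na unfolding V_def by (auto simp: norm_mult cmod_w3)
  have vn: "v \<noteq> 0" if "v \<in> V" for v using nv[OF that] by auto
  have SV: "{a,b,c} = {v, v * w3, v * w3c}" if "v \<in> V" for v using S rot[OF that] unfolding V_def by simp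
  have mv: "Re (p/v) \<le> 1" if "v \<in> V" for v
    using max_vertex[OF assms(1) assms(3) SV[OF that] vn[OF that] pK] .
  obtain v where v: "v \<in> V" "Re (p/v) \<le> -1/2"
    using interior_case[OF T' an pF] unfolding V_def by auto
  have "bisect_triangle p (pi/3) (1/2) \<subseteq> K"
  proof (rule vertex_case[OF assms(1) _ pK nv[OF v(1)] v(2)])
    show "{v, v * w3, v * w3c} \<subseteq> K" using rot[OF v(1)] T' unfolding V_def
      by (metis hull_subset subset_trans)
    show "Re (p/(v * w3c)) \<le> 1" using mv[OF rotw(2)[OF v(1)]] .
    show "Re (p/(v * w3)) \<le> 1" using mv[OF rotw(1)[OF v(1)]] .
  qed
  then show "bisecting K (pi / 3) (1/2) p" unfolding bisecting_def using pF by simp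
qed

end
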